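(* Assume $d\ge3$. The following are equivalent: (i) $a^*_i+a^*_{i+1}=a^*_{i+1}+a^*_{i+2}$ for every integer $i$ with $0\le i\le d-3$; (ii) $a^*_i+a^*_{i+1}=a^*_{i+1}+a^*_{i+2}$ for some integer $i$ with $0\le i\le d-3$; (iii) $r-s=0$ or $r+s=0$.
   Context: Fix an integer $d\ge0$ and $r,s\in(-1,\infty)$. Write $(x)_i=x(x+1)\cdots(x+i-1)$, $(x)_0=1$. For $0\le i\le d$ put $\theta^*_i=i$. Put $b^*_i=\frac{(d-i)(i-d-s)(2d-2i+r+s+2)_i}{(2d-2i+r+s)_{i+1}}$ ($0\le i\le d-1$), $c^*_i=\frac{i(i-d-r-1)(d-i+r+s+1)_{d-i}}{(d-i+r+s+2)_{d-i+1}}$ ($1\le i\le d$), $b^*_d=c^*_0=0$, and $a^*_i=\theta^*_0-b^*_i-c^*_i$ for $0\le i\le d$. *)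

theory Defs
  imports Complex_Main
begin

definition theta_star :: "nat \<Rightarrow> real" where
  "theta_star i = real i"

definition b_star :: "nat \<Rightarrow> real \<Rightarrow> real \<Rightarrow> nat \<Rightarrow> real" where
  "b_star d r s i =
     (if i < d then
        (real d - real i) * (real i - real d - s)
          * pochhammer (2 * real d - 2 * real i + r + s + 2) i
          / pochhammer (2 * real d - 2 * real i + r + s) (i + 1)
      else 0)"

definition c_star :: "nat \<Rightarrow> real \<Rightarrow> real \<Rightarrow> nat \<Rightarrow> real" where
  "c_star d r s i =
     (if 1 \<le> i \<and> i \<le> d then
        real i * (real i - real d - r - 1)
          * pochhammer (real d - real i + r + s + 1) (d - i)
          / pochhammer (real d - real i + r + s + 2) (d - i + 1)
      else 0)"

definition a_star :: "nat \<Rightarrow> real \<Rightarrow> real \<Rightarrow> nat \<Rightarrow> real" where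
  "a_star d r s i = theta_star 0 - b_star d r s i - c_star d r s i"

end

theory Submission
  imports Defs
begin

lemma poch_a: "pochhammer (x::real) (Suc n) * (x + of_nat n + 1) = x * (x+1) * pochhammer (x+2) n"
proof -
  have "pochhammer x (Suc (Suc n)) = pochhammer x (Suc n) * (x + of_nat (Suc n))"
    by (simp add: pochhammer_rec' mult.commute)
  moreover have "pochhammer x (Suc (Suc n)) = x * (x+1) * pochhammer (x+2) n"
    by (simp add: pochhammer_rec add.assoc)
  ultimately show ?thesis by (simp add: add.assoc)
qed

lemma poch_b: "pochhammer (y::real) n * (y + of_nat n) = y * pochhammer (y+1) n"
proof -
  have "pochhammer y (Suc n) = pochhammer y n * (y + of_nat n)"
    by (simp add: pochhammer_rec' mult.commute)
  moreover have "pochhammer y (Suc n) = y * pochhammer (y+1) n"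
    by (simp add: pochhammer_rec)
  ultimately show ?thesis by simp
qed

lemma b_closed:
  assumes "j < d" "r > -1" "s > -1"
  shows "b_star d r s j = (real d - real j) * (real j - real d - s) * (2*real d - real j + r + s + 1)
     / ((2*real d - 2*real j + r + s) * (2*real d - 2*real j + r + s + 1))"
proof -
  define x where "x = 2 * real d - 2 * real j + r + s"
  have jd: "real j + 1 \<le> real d" using assms by linarith
  have x0: "x > 0" using jd assms unfolding x_def by linarith
  have P: "pochhammer (x+2) j > 0" using x0 by (intro pochhammer_pos) simp
  have E: "pochhammer x (Suc j) * (x + real j + 1) = x * (x+1) * pochhammer (x+2) j"
    by (rule poch_a)
  have Q: "pochhammer x (Suc j) \<noteq> 0"
  proof
    assume "pochhammer x (Suc j) = 0"
    with E have "x * (x+1) * pochhammer (x+2) j = 0" by simp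
    with x0 P show False by simp
  qed
  have xx: "2 * real d - 2 * real j + r + s + 2 = x + 2" unfolding x_def by simp
  have "b_star d r s j = (real d - real j) * (real j - real d - s) * pochhammer (x+2) j / pochhammer x (Suc j)"
    using assms unfolding b_star_def xx by (simp add: x_def)
  also have "\<dots> = (real d - real j) * (real j - real d - s) * (pochhammer (x+2) j / pochhammer x (Suc j))"
    by simp
  also have "pochhammer (x+2) j / pochhammer x (Suc j) = (x + real j + 1) / (x * (x+1))"
  proof -
    have "x * (x+1) \<noteq> 0" using x0 by (simp add: add_pos_pos)
    then show ?thesis using E Q by (subst frac_eq_eq) (auto simp: algebra_simps)
  qed
  also have "(real d - real j) * (real j - real d - s) * ((x + real j + 1) / (x * (x+1)))
     = (real d - real j) * (real j - real d - s) * (x + real j + 1) / (x * (x+1))" by simp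
  finally show ?thesis unfolding x_def by (simp add: algebra_simps)
qed

lemma c_closed:
  assumes "j < d" "r > -1" "s > -1"
  shows "c_star d r s j = real j * (real j - real d - r - 1) * (real d - real j + r + s + 1)
     / ((2*real d - 2*real j + r + s + 1) * (2*real d - 2*real j + r + s + 2))"
proof (cases "j = 0")
  case True then show ?thesis by (simp add: c_star_def)
next
  case False
  define y where "y = real d - real j + r + s + 1"
  define n where "n = d - j"
  have rn: "real n = real d - real j" using assms unfolding n_def by simp
  have jd: "real j + 1 \<le> real d" using assms by linarith
  have yn: "y + real n > 0" using jd assms unfolding y_def rn by linarith
  have P: "pochhammer (y+1) n > 0" using assms jd unfolding y_def by (intro pochhammer_pos) simp
  have E: "pochhammer y n * (y + real n) = y * pochhammer (y+1) n" by (rule poch_b)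
  have E2: "pochhammer (y+1) (Suc n) = pochhammer (y+1) n * (y + 1 + real n)"
    by (simp add: pochhammer_rec' mult.commute)
  have yy: "real d - real j + r + s + 2 = y + 1" unfolding y_def by simp
  have "c_star d r s j = real j * (real j - real d - r - 1) * pochhammer y n / pochhammer (y+1) (Suc n)"
    using assms False unfolding c_star_def yy by (simp add: y_def n_def Suc_diff_le)
  also have "\<dots> = real j * (real j - real d - r - 1) * (pochhammer y n / pochhammer (y+1) (Suc n))"
    by simp
  also have "pochhammer y n / pochhammer (y+1) (Suc n) = y / ((y + real n) * (y + real n + 1))"
  proof -
    have "(y + real n) * (y + real n + 1) \<noteq> 0" using yn by (simp add: add_pos_pos)
    moreover have "pochhammer (y+1) (Suc n) \<noteq> 0" using E2 P yn by simp
    moreover have "pochhammer y n * ((y + real n) * (y + real n + 1)) = y * pochhammer (y+1) (Suc n)"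
      unfolding E2 using E by (metis (no_types, lifting) add.commute add.left_commute mult.assoc)
    ultimately show ?thesis by (subst frac_eq_eq) auto
  qed
  also have "real j * (real j - real d - r - 1) * (y / ((y + real n) * (y + real n + 1)))
     = real j * (real j - real d - r - 1) * y / ((y + real n) * (y + real n + 1))" by simp
  finally show ?thesis unfolding y_def rn by (simp add: algebra_simps)
qed

lemma alg0:
  fixes D dd jj r s :: real
  assumes D: "D > 4" and s: "s = D - 2*dd + 2*jj - r"
  shows "(- ((dd-jj)*(jj-dd-s)*(D+jj+1) / (D*(D+1))) - jj*(jj-dd-r-1)*(D-dd+jj+1)/((D+1)*(D+2)))
       - (- ((dd-jj-2)*(jj+2-dd-s)*(D+jj-1) / ((D-4)*(D-3))) - (jj+2)*(jj+1-dd-r)*(D-dd+jj-1)/((D-3)*(D-2)))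
       = -2*(r-s)*(r+s)*(D-1)*(r+s+2*dd+2) / (D*(D+2)*(D-4)*(D-2))"
proof -
  have nz: "D \<noteq> 0" "D+1 \<noteq> 0" "D+2 \<noteq> 0" "D-2 \<noteq> 0" "D-3 \<noteq> 0" "D-4 \<noteq> 0" using D by auto
  show ?thesis unfolding s using nz
    by (simp add: divide_simps del: eq_iff_diff_eq_0) algebra
qed

lemma key:
  assumes "i + 3 \<le> d" "r > -1" "s > -1"
  shows "a_star d r s i - a_star d r s (i+2) =
    -2*(r-s)*(r+s)*((2*real d - 2*real i + r + s)-1)*(r+s+2*real d+2)
      / ((2*real d - 2*real i + r + s)*((2*real d - 2*real i + r + s)+2)
         *((2*real d - 2*real i + r + s)-4)*((2*real d - 2*real i + r + s)-2))"
proof -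
  define D where "D = 2*real d - 2*real i + r + s"
  have D4: "D > 4" using assms unfolding D_def by linarith
  have s: "s = D - 2*real d + 2*real i - r" unfolding D_def by simp
  have "a_star d r s i - a_star d r s (i+2) =
     (- ((real d-real i)*(real i-real d-s)*(D+real i+1) / (D*(D+1))) - real i*(real i-real d-r-1)*(D-real d+real i+1)/((D+1)*(D+2)))
       - (- ((real d-real i-2)*(real i+2-real d-s)*(D+real i-1) / ((D-4)*(D-3))) - (real i+2)*(real i+1-real d-r)*(D-real d+real i-1)/((D-3)*(D-2)))"
    using assms unfolding a_star_def theta_star_def
    by (simp add: b_closed c_closed D_def algebra_simps)
  also have "\<dots> = -2*(r-s)*(r+s)*(D-1)*(r+s+2*real d+2) / (D*(D+2)*(D-4)*(D-2))"
    by (rule alg0[OF D4 s])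
  finally show ?thesis unfolding D_def .
qed

lemma each:
  assumes "d \<ge> 3" "r > -1" "s > -1" "i \<le> d - 3"
  shows "(a_star d r s i + a_star d r s (i + 1) = a_star d r s (i + 1) + a_star d r s (i + 2))
     \<longleftrightarrow> (r - s = 0 \<or> r + s = 0)"
proof -
  have i3: "i + 3 \<le> d" using assms by linarith
  define D where "D = 2*real d - 2*real i + r + s"
  have D4: "D > 4" using i3 assms unfolding D_def by linarith
  have p: "r+s+2*real d+2 > 0" using assms by linarith
  have "(a_star d r s i + a_star d r s (i + 1) = a_star d r s (i + 1) + a_star d r s (i + 2))
     \<longleftrightarrow> a_star d r s i - a_star d r s (i+2) = 0" by linarith
  also have "\<dots> \<longleftrightarrow> -2*(r-s)*(r+s)*(D-1)*(r+s+2*real d+2) / (D*(D+2)*(D-4)*(D-2)) = 0"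
    unfolding key[OF i3 assms(2,3)] D_def ..
  also have "\<dots> \<longleftrightarrow> (r - s = 0 \<or> r + s = 0)"
    using D4 p by auto
  finally show ?thesis .
qed

theorem lemma2p9:
  fixes d :: nat and r s :: real
  assumes "d \<ge> 3" and "r > -1" and "s > -1"
  shows "((\<forall>i. i \<le> d - 3 \<longrightarrow>
             a_star d r s i + a_star d r s (i + 1) = a_star d r s (i + 1) + a_star d r s (i + 2))
          \<longleftrightarrow>
          (\<exists>i. i \<le> d - 3 \<and>
             a_star d r s i + a_star d r s (i + 1) = a_star d r s (i + 1) + a_star d r s (i + 2)))
       \<and>
         ((\<exists>i. i \<le> d - 3 \<and>
             a_star d r s i + a_star d r s (i + 1) = a_star d r s (i + 1) + a_star d r s (i + 2))
          \<longleftrightarrow> (r - s = 0 \<or> r + s = 0))"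
  using each[OF assms] by blast

end
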